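(* For every integer $j\ge 0$, $$\sum_{n=1}^{\infty}\frac{4^n}{n^2\binom{2n}{n}}\,t_n^{\star}(\{2\}_j)=8\sum_{k=0}^{2j}(-1)^k\,\beta(k+1)\,\beta(2j-k+1).$$
   Context: For integers $n\ge 1$ and $j\ge 0$, the multiple $t$-harmonic star sum of depth $j$ and weight $2j$ is $$t_n^{\star}(\{2\}_j)=\sum_{n\ge k_1\ge\dots\ge k_j\ge 1}\prod_{i=1}^j\frac{1}{(2k_i-1)^2},$$ equivalently $t_n^{\star}(\emptyset)=1$ and $t_n^{\star}(\{2\}_j)=\sum_{k=1}^n \frac{t_k^{\star}(\{2\}_{j-1})}{(2k-1)^2}$ for $j\ge1$. The Dirichlet beta function is $\beta(m)=\sum_{k=1}^\infty \frac{(-1)^{k-1}}{(2k-1)^m}$ for integers $m\ge1$ (so $\beta(1)=\pi/4$). *)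

theory Defs
  imports "HOL-Analysis.Analysis"
begin

fun tstar2 :: "nat \<Rightarrow> nat \<Rightarrow> real" where
  "tstar2 0 n = 1"
| "tstar2 (Suc j) n = (\<Sum>k=1..n. tstar2 j k / (2 * real k - 1)^2)"

text \<open>Dirichlet beta function at positive integers m:
  beta(m) = sum_{k>=1} (-1)^(k-1)/(2k-1)^m, written with index k = i+1.\<close>
definition dbeta :: "nat \<Rightarrow> real" where
  "dbeta m = (\<Sum>i. (-1)^i / (2 * real i + 1)^m)"

end

theory Submission
  imports Defs
begin

definition bb :: "nat \<Rightarrow> nat \<Rightarrow> real" where
  "bb n k = (if k \<le> n then real (2*n choose (n-k)) else 0)"

lemma bb_nonneg: "bb n k \<ge> 0" by (simp add: bb_def)

lemma bb_le: "bb n k \<le> real (2*n choose n)"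
  by (simp add: bb_def binomial_maximum')

lemma bb_same: "bb n n = 1" by (simp add: bb_def)

lemma nat_B1: "i < N \<Longrightarrow> (N choose Suc i) * Suc i = (N choose i) * (N - i)"
proof -
  assume "i < N"
  then obtain M where M: "N = Suc M" by (cases N) auto
  have "(N choose Suc i) * Suc i = N * (M choose i)"
    using Suc_times_binomial_eq[of M i] M by simp
  also have "\<dots> = (N - i) * (N choose i)"
    using binomial_absorb_comp[of N i] M by simp
  finally show ?thesis by simp
qed

lemma bb_B1: "k \<le> n \<Longrightarrow> bb n (Suc k) * (real n + real k + 1) = bb n k * (real n - real k)"
proof (cases "k = n")
  case True then show ?thesis by (simp add: bb_def)
next
  case False
  assume "k \<le> n"
  with False have kn: "k < n" by simp
  define i where "i = n - Suc k"
  have e1: "n - k = Suc i" using kn i_def by simp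
  have e2: "2*n - i = n + k + 1" using kn i_def by simp
  have "(2*n choose Suc i) * Suc i = (2*n choose i) * (2*n - i)"
    by (rule nat_B1) (use kn i_def in simp)
  hence "real (2*n choose Suc i) * real (Suc i) = real (2*n choose i) * real (n+k+1)"
    using e2 by (metis of_nat_mult)
  moreover have "real (Suc i) = real n - real k" using e1 kn by linarith
  ultimately show ?thesis using kn e1 i_def by (simp add: bb_def)
qed

lemma bb_B2: "k \<le> n \<Longrightarrow> bb (Suc n) k * ((real n + 1 - real k) * (real n + 1 + real k))
   = bb n k * ((2*real n + 2) * (2*real n + 1))"
proof -
  assume kn: "k \<le> n"
  define i where "i = n - k"
  have a1: "(2*n+2 choose Suc i) * Suc i = (2*n+2) * (2*n+1 choose i)"
    using Suc_times_binomial_eq[of "2*n+1" i] by (simp del: binomial_Suc_Suc)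
  have a2: "(2*n+1 - i) * (2*n+1 choose i) = (2*n+1) * (2*n choose i)"
    using binomial_absorb_comp[of "2*n+1" i] by simp
  have e2: "2*n+1 - i = n + k + 1" using kn i_def by simp
  have "real (2*n+2 choose Suc i) * real (Suc i) * real (n+k+1)
      = real (2*n+2) * real (2*n+1) * real (2*n choose i)"
  proof -
    have "(2*n+2 choose Suc i) * Suc i * (n+k+1) = (2*n+2) * ((2*n+1 - i) * (2*n+1 choose i))"
      using a1 e2 by (simp del: binomial_Suc_Suc add: algebra_simps)
    also have "\<dots> = (2*n+2) * (2*n+1) * (2*n choose i)" using a2 by (metis mult.assoc)
    finally show ?thesis by (metis of_nat_mult)
  qed
  moreover have "Suc n - k = Suc i" using kn i_def by simp
  moreover have "real (Suc i) = real n + 1 - real k" using kn i_def by simp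
  ultimately show ?thesis using kn i_def
    by (simp add: bb_def algebra_simps)
qed


lemma wz_alg: fixes n k X Y W q d e :: real
  assumes "n>0" "k>0" "q>0" "d>0" "e>0" "d = n+k+1" "e = 1+n" "Y = X*(n-k)/d" "W = X*((2*n+2)*(2*n+1))/d"
  shows "(k+1)*Y/(n*q) - k*X/(n*q) = -2*W/(e*(4*q)) - (-2*(n-k)*X/(n*q))"
proof -
  have "(k+1)*Y/(n*q) - k*X/(n*q) - (-2*W/(e*(4*q)) - (-2*(n-k)*X/(n*q))) = 
     X * ((k+1)*(n-k)*e*2 - k*d*e*2 + (2*n+1)*n*(1+n)*2 - 2*(n-k)*d*e*2) / (n*q*d*e*2)"
    using assms(1-5) unfolding assms(8,9) by (simp add: field_simps) 
  also have "\<dots> = 0" unfolding assms(6,7) by (simp add: algebra_simps)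
  finally show ?thesis by simp
qed

lemma ss1_alg: fixes N X Z q e f g h :: real
  assumes "N>0" "q>0" "e>0" "f>0" "g>0" "h>0" "e = N+1" "f = N+2" "g = 2*N+1" "h = 2*N+2"
    "X = Z*(N*f)/(h*g)"
  shows "1 - g*X/(N*q) + Z/(e*(4*q)) = 1 - (2*e+1)*Z/(e*(4*q))"
  using assms(1-6) unfolding assms(11) by (simp add: field_simps) (simp add: assms(7-10) algebra_simps)

lemma cen_alg: fixes n X Z q e h g :: real
  assumes "n\<ge>0" "q>0" "e>0" "h>0" "e = n+1" "h=2*n+2" "g = 2*n+1" "Z = X*(h*g)/(e*e)"
  shows "Z/(4*q) = X/q*g/h"
  using assms(1-4) unfolding assms(8) by (simp add: field_simps) (simp add: assms(5-7) algebra_simps)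

definition FF :: "nat \<Rightarrow> nat \<Rightarrow> real" where
  "FF n k = real k * bb n k / (real n * 4^n)"
definition GG :: "nat \<Rightarrow> nat \<Rightarrow> real" where
  "GG n k = -2 * (real n - real k) * bb n k / (real n * 4^n)"

lemma bb_zero: "n < k \<Longrightarrow> bb n k = 0" by (simp add: bb_def)

lemma WZ: assumes "n \<ge> 1" "k \<ge> 1"
  shows "FF n (Suc k) - FF n k = GG (Suc n) k - GG n k"
proof (cases "k \<le> n")
  case True
  have Y: "bb n (Suc k) = bb n k * (real n - real k) / (real n + real k + 1)"
    using bb_B1[OF True] by (subst eq_divide_eq) auto
  have Z: "(1 + real n - real k) * bb (Suc n) k = bb n k * ((2*real n + 2) * (2*real n + 1)) / (real n + real k + 1)"
    using bb_B2[OF True] by (subst eq_divide_eq) (auto simp: algebra_simps)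
  have L: "FF n (Suc k) - FF n k = (real k+1)*bb n (Suc k)/(real n*4^n) - real k*bb n k/(real n*4^n)"
    by (simp add: FF_def)
  have R: "GG (Suc n) k - GG n k = -2*((1 + real n - real k) * bb (Suc n) k)/((1 + real n)*(4*4^n)) - (-2*(real n-real k)*bb n k/(real n*4^n))"
    by (simp only: GG_def of_nat_Suc power_Suc mult.assoc)
  show ?thesis unfolding L R
    by (rule wz_alg[OF _ _ _ _ _ refl refl Y Z]) (use assms in auto)
next
  case False
  then have "bb n k = 0" "bb n (Suc k) = 0" by (auto simp: bb_zero)
  moreover have "GG (Suc n) k = 0"
    using False by (cases "k = Suc n") (auto simp: GG_def bb_zero)
  ultimately show ?thesis by (simp add: FF_def GG_def)
qed

definition SS :: "nat \<Rightarrow> nat \<Rightarrow> real" where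
  "SS N k = (\<Sum>i<N. FF (Suc i) k)"

lemma SS_rec: assumes "k \<ge> 1" shows "SS N (Suc k) - SS N k = GG (Suc N) k"
proof (induction N)
  case 0
  show ?case using assms by (cases "k = 1") (auto simp: SS_def GG_def bb_zero)
next
  case (Suc N)
  have "SS (Suc N) (Suc k) - SS (Suc N) k = (SS N (Suc k) - SS N k) + (FF (Suc N) (Suc k) - FF (Suc N) k)"
    by (simp add: SS_def)
  also have "\<dots> = GG (Suc (Suc N)) k" using Suc WZ[of "Suc N" k] assms by simp
  finally show ?case .
qed

lemma SS_1: "SS (Suc N) 1 = 1 - (2*real (Suc N) + 1) * bb (Suc N) 1 / (real (Suc N) * 4^(Suc N))"
proof (induction N)
  case 0
  show ?case by (simp add: SS_def FF_def bb_def)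
next
  case (Suc N)
  have B: "bb (Suc (Suc N)) 1 * ((real (Suc N)) * (real (Suc N) + 2)) = bb (Suc N) 1 * ((2*real (Suc N) + 2) * (2*real (Suc N) + 1))"
    using bb_B2[of 1 "Suc N"] by (simp add: algebra_simps)
  have "SS (Suc (Suc N)) 1 = SS (Suc N) 1 + FF (Suc (Suc N)) 1" by (simp add: SS_def)
  also have "\<dots> = 1 - (2*real (Suc N) + 1) * bb (Suc N) 1 / (real (Suc N) * 4^(Suc N)) + bb (Suc (Suc N)) 1 / (real (Suc (Suc N)) * 4^(Suc (Suc N)))"
    using Suc by (simp add: FF_def)
  also have "\<dots> = 1 - (2*real (Suc (Suc N)) + 1) * bb (Suc (Suc N)) 1 / (real (Suc (Suc N)) * 4^(Suc (Suc N)))"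
  proof -
    have X: "bb (Suc N) 1 = bb (Suc (Suc N)) 1 * ((real (Suc N)) * (real (Suc N) + 2)) / ((2*real (Suc N) + 2) * (2*real (Suc N) + 1))"
      using B by (subst eq_divide_eq) auto
    have "1 - (2*real (Suc N) + 1) * bb (Suc N) 1 / (real (Suc N) * 4^(Suc N)) + bb (Suc (Suc N)) 1 / ((real (Suc N) + 1) * (4 * 4^(Suc N)))
      = 1 - (2*(real (Suc N) + 1) + 1) * bb (Suc (Suc N)) 1 / ((real (Suc N) + 1) * (4 * 4^(Suc N)))"
      by (rule ss1_alg[OF _ _ _ _ _ _ refl refl refl refl X]) auto
    then show ?thesis by (simp add: algebra_simps)
  qed
  finally show ?case .
qed

lemma cen_ineq: fixes x :: real assumes "x \<ge> 0"
  shows "1/(2*x+1)*((2*x+1)/(2*x+2))^2 \<le> 1/(2*(x+1)+1)"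
proof -
  have e: "1/(2*x+1)*((2*x+1)/(2*x+2))^2 = (2*x+1)/((2*x+2)*(2*x+2))"
    using assms by (simp add: power2_eq_square divide_simps)
  have "(2*x+1)*(2*(x+1)+1) \<le> 1*((2*x+2)*(2*x+2))" by (simp add: algebra_simps)
  then have "(2*x+1)/((2*x+2)*(2*x+2)) \<le> 1/(2*(x+1)+1)"
    using assms by (subst frac_le_eq) (auto simp: divide_simps)
  then show ?thesis using e by simp
qed

definition cen :: "nat \<Rightarrow> real" where "cen n = bb n 0 / 4^n"

lemma cen_nonneg: "cen n \<ge> 0" by (simp add: cen_def bb_nonneg)

lemma cen_sq: "cen n ^ 2 \<le> 1 / (2 * real n + 1)"
proof (induction n)
  case 0 show ?case by (simp add: cen_def bb_def)
next
  case (Suc n)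
  have B: "bb (Suc n) 0 * ((real n + 1) * (real n + 1)) = bb n 0 * ((2*real n + 2) * (2*real n + 1))"
    using bb_B2[of 0 n] by simp
  have B': "bb (Suc n) 0 = bb n 0 * ((2*real n + 2) * (2*real n + 1)) / ((real n + 1) * (real n + 1))"
    using B by (subst eq_divide_eq) auto
  have h: "bb (Suc n) 0/(4*4^n) = bb n 0/4^n*(2*real n+1)/(2*real n+2)"
    by (rule cen_alg[OF _ _ _ _ refl refl refl B']) auto
  have C: "cen (Suc n) = cen n * (2*real n + 1) / (2*real n + 2)"
    by (simp only: cen_def power_Suc h)
  have "cen (Suc n) ^ 2 = cen n ^ 2 * ((2*real n + 1) / (2*real n + 2))^2"
    unfolding C by (simp add: power_mult_distrib power_divide)
  also have "\<dots> \<le> 1 / (2 * real n + 1) * ((2*real n + 1) / (2*real n + 2))^2"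
    by (rule mult_right_mono[OF Suc]) simp
  also have "\<dots> \<le> 1 / (2 * real (Suc n) + 1)"
    using cen_ineq[of "real n"] by simp
  finally show ?case .
qed

lemma cen_lim: "cen \<longlonglongrightarrow> 0"
proof -
  have "(\<lambda>n. cen n ^ 2) \<longlonglongrightarrow> 0"
  proof (rule tendsto_sandwich[of "\<lambda>_. 0" _ _ "\<lambda>n. inverse (real (Suc n))"])
    show "\<forall>\<^sub>F n in sequentially. 0 \<le> cen n ^ 2" by simp
    show "\<forall>\<^sub>F n in sequentially. cen n ^ 2 \<le> inverse (real (Suc n))"
    proof (intro always_eventually allI)
      fix n
      have "1 / (2 * real n + 1) \<le> inverse (real (Suc n))"
        by (simp add: field_simps)
      then show "cen n ^ 2 \<le> inverse (real (Suc n))" using cen_sq[of n] by linarith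
    qed
  qed (auto intro!: LIMSEQ_inverse_real_of_nat simp del: of_nat_Suc)
  then have "(\<lambda>n. sqrt (cen n ^ 2)) \<longlonglongrightarrow> sqrt 0" by (intro tendsto_intros)
  then show ?thesis using cen_nonneg by simp
qed

lemma SS1_lim: "(\<lambda>N. SS N 1) \<longlonglongrightarrow> 1"
proof -
  have bnd: "\<bar>(2*real (Suc N) + 1) * bb (Suc N) 1 / (real (Suc N) * 4^(Suc N))\<bar> \<le> 3 * cen (Suc N)" for N
  proof -
    have e: "(2*real (Suc N) + 1) * bb (Suc N) 1 / (real (Suc N) * 4^(Suc N))
       = ((2*real (Suc N) + 1) / real (Suc N)) * (bb (Suc N) 1 / 4^(Suc N))" by simp
    have "bb (Suc N) 1 \<le> bb (Suc N) 0" using bb_le[of "Suc N" 1] by (simp add: bb_def)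
    then have "bb (Suc N) 1 / 4^(Suc N) \<le> bb (Suc N) 0 / 4^(Suc N)"
      by (intro divide_right_mono) auto
    moreover have "(2*real (Suc N) + 1) / real (Suc N) \<le> 3" by (simp add: field_simps)
    ultimately have "((2*real (Suc N) + 1) / real (Suc N)) * (bb (Suc N) 1 / 4^(Suc N)) \<le> 3 * (bb (Suc N) 0 / 4^(Suc N))"
      using bb_nonneg by (intro mult_mono) auto
    moreover have "0 \<le> ((2*real (Suc N) + 1) / real (Suc N)) * (bb (Suc N) 1 / 4^(Suc N))"
      using bb_nonneg by simp
    ultimately show ?thesis unfolding e cen_def by linarith
  qed
  have "(\<lambda>N. 3 * cen (Suc N)) \<longlonglongrightarrow> 3 * 0"
    using cen_lim by (intro tendsto_intros) (rule LIMSEQ_Suc)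
  then have lim3: "(\<lambda>N. 3 * cen (Suc N)) \<longlonglongrightarrow> 0" by simp
  have "(\<lambda>N. (2*real (Suc N) + 1) * bb (Suc N) 1 / (real (Suc N) * 4^(Suc N))) \<longlonglongrightarrow> 0"
    by (rule Lim_null_comparison[OF always_eventually lim3]) (use bnd in auto)
  then have "(\<lambda>N. 1 - (2*real (Suc N) + 1) * bb (Suc N) 1 / (real (Suc N) * 4^(Suc N))) \<longlonglongrightarrow> 1 - 0"
    by (intro tendsto_intros)
  then have "(\<lambda>N. SS (Suc N) 1) \<longlonglongrightarrow> 1 - 0" unfolding SS_1 .
  then have "(\<lambda>N. SS (Suc N) 1) \<longlonglongrightarrow> 1" by simp
  then show ?thesis by (rule LIMSEQ_imp_Suc[of "\<lambda>N. SS N 1"])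
qed

lemma GG_bound: "n \<ge> 1 \<Longrightarrow> \<bar>GG n k\<bar> \<le> 2 * cen n"
proof -
  assume n: "n \<ge> 1"
  have "\<bar>real n - real k\<bar> * bb n k \<le> real n * bb n 0"
  proof (cases "k \<le> n")
    case True
    then have "\<bar>real n - real k\<bar> \<le> real n" by simp
    moreover have "bb n k \<le> bb n 0" using bb_le[of n k] by (simp add: bb_def)
    ultimately show ?thesis using bb_nonneg by (intro mult_mono) auto
  next
    case False then show ?thesis by (simp add: bb_zero bb_nonneg)
  qed
  then have "\<bar>real n - real k\<bar> * bb n k / (real n * 4^n) \<le> real n * bb n 0 / (real n * 4^n)"
    by (intro divide_right_mono) auto
  moreover have "\<bar>GG n k\<bar> = 2 * (\<bar>real n - real k\<bar> * bb n k / (real n * 4^n))"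
    by (simp add: GG_def abs_mult abs_divide bb_nonneg) (auto simp: abs_if)
  moreover have "real n * bb n 0 / (real n * 4^n) = cen n" using n by (simp add: cen_def)
  ultimately show ?thesis by linarith
qed

lemma GG_lim: "(\<lambda>N. GG (Suc N) k) \<longlonglongrightarrow> 0"
proof -
  have "(\<lambda>N. 2 * cen (Suc N)) \<longlonglongrightarrow> 2 * 0"
    using cen_lim by (intro tendsto_intros) (rule LIMSEQ_Suc)
  then have lim2: "(\<lambda>N. 2 * cen (Suc N)) \<longlonglongrightarrow> 0" by simp
  show ?thesis
    by (rule Lim_null_comparison[OF always_eventually lim2]) (use GG_bound in auto)
qed

lemma SS_lim: "k \<ge> 1 \<Longrightarrow> (\<lambda>N. SS N k) \<longlonglongrightarrow> 1"
proof (induction k rule: dec_induct)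
  case base then show ?case by (rule SS1_lim)
next
  case (step k)
  have "(\<lambda>N. SS N k + GG (Suc N) k) \<longlonglongrightarrow> 1 + 0"
    using step GG_lim by (intro tendsto_intros)
  moreover have "SS N (Suc k) = SS N k + GG (Suc N) k" for N
    using SS_rec[OF step(1), of N] by simp
  ultimately show ?case by simp
qed

lemma FF_sums: "k \<ge> 1 \<Longrightarrow> (\<lambda>i. FF (Suc i) k) sums 1"
  unfolding sums_def using SS_lim by (simp add: SS_def)


definition ee :: "nat \<Rightarrow> nat \<Rightarrow> real" where
  "ee n k = bb n k * (real n + real k) / (4^n * real n ^ 2)"

lemma ee_nonneg: "ee n k \<ge> 0" by (simp add: ee_def bb_nonneg)

lemma ee_Suc: "ee n (Suc k) = bb n k * (real n - real k) / (4^n * real n ^ 2)"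
proof (cases "k \<le> n")
  case True
  have "bb n (Suc k) * (real n + real (Suc k)) = bb n k * (real n - real k)"
    using bb_B1[OF True] by (simp add: algebra_simps)
  then show ?thesis by (simp add: ee_def)
next
  case False then show ?thesis by (simp add: ee_def bb_zero)
qed

lemma ee_mono: "ee n (Suc k) \<le> ee n k"
proof -
  have "bb n k * (real n - real k) \<le> bb n k * (real n + real k)"
    using bb_nonneg by (intro mult_left_mono) auto
  then show ?thesis unfolding ee_Suc by (simp add: ee_def divide_right_mono)
qed

lemma ee_pair: assumes "n \<ge> 1" "k \<ge> 1"
  shows "ee n k + ee n (Suc k) = 2 / real k * FF n k"
proof -
  have "ee n k + ee n (Suc k) = bb n k * (2 * real n) / (4^n * real n ^ 2)"
    unfolding ee_Suc by (simp add: ee_def add_divide_distrib[symmetric] algebra_simps)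
  also have "\<dots> = 2 / real k * FF n k" using assms
    by (simp add: FF_def power2_eq_square field_simps)
  finally show ?thesis .
qed

lemma ee_summable: assumes "k \<ge> 1" shows "summable (\<lambda>i. ee (Suc i) k)"
proof (rule summable_comparison_test'[where g="\<lambda>i. 2 / real k * FF (Suc i) k"])
  show "summable (\<lambda>i. 2 / real k * FF (Suc i) k)"
    using FF_sums[OF assms] by (intro summable_mult) (auto simp: sums_iff)
  fix i :: nat
  show "norm (ee (Suc i) k) \<le> 2 / real k * FF (Suc i) k"
    using ee_pair[of "Suc i" k] assms ee_nonneg[of "Suc i" "Suc k"] ee_nonneg[of "Suc i" k] by simp
qed

definition EE :: "nat \<Rightarrow> real" where "EE k = (\<Sum>i. ee (Suc i) k)"

lemma EE_nonneg: "k \<ge> 1 \<Longrightarrow> EE k \<ge> 0"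
  unfolding EE_def by (intro suminf_nonneg ee_summable) (auto simp: ee_nonneg)

lemma EE_pair: assumes "k \<ge> 1" shows "EE k + EE (Suc k) = 2 / real k"
proof -
  have "(\<lambda>i. ee (Suc i) k + ee (Suc i) (Suc k)) sums (EE k + EE (Suc k))"
    unfolding EE_def using assms by (intro sums_add summable_sums ee_summable) auto
  moreover have "(\<lambda>i. 2 / real k * FF (Suc i) k) sums (2 / real k * 1)"
    by (rule sums_mult[OF FF_sums[OF assms]])
  moreover have "(\<lambda>i. ee (Suc i) k + ee (Suc i) (Suc k)) = (\<lambda>i. 2 / real k * FF (Suc i) k)"
    using ee_pair[of _ k] assms by auto
  ultimately show ?thesis using sums_unique2 by force
qed

lemma EE_le: "k \<ge> 1 \<Longrightarrow> EE k \<le> 2 / real k"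
  using EE_pair[of k] EE_nonneg[of "Suc k"] by simp

definition Lk :: "nat \<Rightarrow> real" where "Lk k = (\<Sum>b. (-1)^b * (1 / (real k + real b)))"

lemma inv_lim: "k \<ge> 1 \<Longrightarrow> (\<lambda>b. 1 / (real k + real b)) \<longlonglongrightarrow> 0"
proof (rule tendsto_sandwich[of "\<lambda>_. 0" _ _ "\<lambda>n. inverse (real (Suc n))"])
  assume k: "k \<ge> 1"
  show "\<forall>\<^sub>F n in sequentially. 0 \<le> 1 / (real k + real n)" by simp
  show "\<forall>\<^sub>F n in sequentially. 1 / (real k + real n) \<le> inverse (real (Suc n))"
    using k by (intro always_eventually allI) (simp add: field_simps)
qed (auto intro!: LIMSEQ_inverse_real_of_nat simp del: of_nat_Suc)

lemma inv_mono: "k \<ge> 1 \<Longrightarrow> monoseq (\<lambda>b. 1 / (real k + real b))"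
  unfolding monoseq_def by (intro disjI2 allI impI) (simp add: frac_le)

lemma Lk_props: assumes "k \<ge> 1"
  shows "summable (\<lambda>b. (-1)^b * (1 / (real k + real b)))" "0 \<le> Lk k" "Lk k \<le> 1 / real k"
proof -
  note L = summable_Leibniz[OF inv_lim[OF assms] inv_mono[OF assms]]
  show "summable (\<lambda>b. (-1)^b * (1 / (real k + real b)))" by (rule L(1))
  have "0 < 1 / (real k + real 0)" using assms by simp
  then have "Lk k \<in> {\<Sum>i<2 * 0. (- 1) ^ i * (1 / (real k + real i))..\<Sum>i<2 * 0 + 1. (- 1) ^ i * (1 / (real k + real i))}"
    using L(2) unfolding Lk_def by blast
  then show "0 \<le> Lk k" "Lk k \<le> 1 / real k" by auto
qed

lemma Lk_pair: assumes "k \<ge> 1" shows "Lk k + Lk (Suc k) = 1 / real k"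
proof -
  have "Lk k = (\<Sum>b. (-1)^(b+1) * (1 / (real k + real (b+1)))) + (\<Sum>b<1. (-1)^b * (1 / (real k + real b)))"
    unfolding Lk_def by (rule suminf_split_initial_segment[OF Lk_props(1)[OF assms]])
  also have "(\<Sum>b. (-1)^(b+1) * (1 / (real k + real (b+1)))) = - Lk (Suc k)"
  proof -
    have "(\<lambda>b. (-1)^(b+1) * (1 / (real k + real (b+1)))) = (\<lambda>b. - ((-1)^b * (1 / (real (Suc k) + real b))))"
      by (simp add: algebra_simps)
    moreover have "summable (\<lambda>b. (-1)^b * (1 / (real (Suc k) + real b)))"
      by (rule Lk_props(1)) simp
    ultimately show ?thesis unfolding Lk_def by (simp add: suminf_minus)
  qed
  finally show ?thesis by simp
qed

lemma EE_Lk: assumes "k \<ge> 1" shows "EE k = 2 * Lk k"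
proof -
  define D where "D k = EE k - 2 * Lk k" for k
  have Dp: "D (Suc k) = - D k" if "k \<ge> 1" for k
    using EE_pair[OF that] Lk_pair[OF that] by (simp add: D_def)
  have Dabs: "\<bar>D k\<bar> = \<bar>D 1\<bar>" if "k \<ge> 1" for k
    using that by (induction k rule: dec_induct) (auto simp: Dp)
  have Db: "\<bar>D k\<bar> \<le> 4 / real k" if "k \<ge> 1" for k
    using EE_le[OF that] EE_nonneg[OF that] Lk_props(2,3)[OF that] by (simp add: D_def abs_le_iff)
  have "D 1 = 0"
  proof (rule ccontr)
    assume "D 1 \<noteq> 0"
    then have pos: "\<bar>D 1\<bar> > 0" by simp
    obtain k :: nat where k: "k > 4 / \<bar>D 1\<bar>" using reals_Archimedean2 by blast
    then have k1: "k \<ge> 1" using pos by (cases k) (auto simp: field_simps)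
    have "\<bar>D 1\<bar> \<le> 4 / real k" using Db[OF k1] Dabs[OF k1] by simp
    then have "\<bar>D 1\<bar> * real k \<le> 4" using k1 by (simp add: field_simps)
    moreover have "4 < \<bar>D 1\<bar> * real k" using k pos by (simp add: field_simps)
    ultimately show False by simp
  qed
  then have "D k = 0" using Dabs[OF assms] by simp
  then show ?thesis by (simp add: D_def)
qed

definition odd_r :: "nat \<Rightarrow> real" where "odd_r k = 2 * real k - 1"

lemma odd_r_pos: "k \<ge> 1 \<Longrightarrow> odd_r k \<ge> 1" by (simp add: odd_r_def)

lemma odd_r_sq_eq: "i \<ge> 1 \<Longrightarrow> k \<ge> 1 \<Longrightarrow> odd_r i ^ 2 = odd_r k ^ 2 \<longleftrightarrow> i = k"
proof -
  assume "i \<ge> 1" "k \<ge> 1"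
  then have "odd_r i \<ge> 0" "odd_r k \<ge> 0" using odd_r_pos by (auto intro: order_trans[of 0 1])
  then have "odd_r i ^ 2 = odd_r k ^ 2 \<longleftrightarrow> odd_r i = odd_r k" by (simp add: power2_eq_iff_nonneg)
  then show ?thesis by (simp add: odd_r_def)
qed

definition cc :: "nat \<Rightarrow> nat \<Rightarrow> real" where
  "cc n k = (\<Prod>i\<in>{1..n}-{k}. odd_r i ^ 2 / (odd_r i ^ 2 - odd_r k ^ 2))"

definition TT :: "nat \<Rightarrow> real \<Rightarrow> real" where
  "TT n x = (\<Prod>i\<in>{1..n}. odd_r i ^ 2 / (odd_r i ^ 2 - x ^ 2))"

lemma cc_Suc: "k \<le> n \<Longrightarrow> cc (Suc n) k = cc n k * (odd_r (Suc n) ^ 2 / (odd_r (Suc n) ^ 2 - odd_r k ^ 2))"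
proof -
  assume "k \<le> n"
  then have "{1..Suc n} - {k} = insert (Suc n) ({1..n} - {k})" by auto
  then show ?thesis unfolding cc_def by (simp add: mult.commute)
qed

lemma cc_diag: "cc (Suc n) (Suc n) = TT n (odd_r (Suc n))"
proof -
  have "{1..Suc n} - {Suc n} = {1..n}" by auto
  then show ?thesis unfolding cc_def TT_def by simp
qed

lemma TT_Suc: "TT (Suc n) x = TT n x * (odd_r (Suc n) ^ 2 / (odd_r (Suc n) ^ 2 - x ^ 2))"
  unfolding TT_def by (simp add: mult.commute)

lemma pf_alg: fixes a b x :: real assumes "a \<noteq> b" "a \<noteq> x" "b \<noteq> x"
  shows "(a/(a-x))*(b/(b-x)) = (b/(b-a))*(a/(a-x)) + (a/(a-b))*(b/(b-x))"
proof -
  have h: "a - x \<noteq> 0" "b - x \<noteq> 0" "b - a \<noteq> 0" "a - b \<noteq> 0" using assms by auto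
  have "(b/(b-a))*(a/(a-x)) + (a/(a-b))*(b/(b-x)) = a*b/(b-a) * (1/(a-x) - 1/(b-x))"
    using h by (simp add: divide_simps) (simp add: algebra_simps)
  also have "1/(a-x) - 1/(b-x) = (b-a)/((a-x)*(b-x))"
    using h by (simp add: divide_simps)
  finally show ?thesis using h by simp
qed

lemma pf_alg2: fixes a b x c :: real assumes "a \<noteq> b" "a \<noteq> x" "b \<noteq> x"
  shows "c*(a/(a-x))*(b/(b-x)) = (c*(b/(b-a)))*(a/(a-x)) + c*(a/(a-b))*(b/(b-x))"
  by (simp only: mult.assoc pf_alg[OF assms] distrib_left)

lemma xid: "(\<forall>i\<in>{1..Suc n}. x ^ 2 \<noteq> odd_r i ^ 2) \<Longrightarrow>
   TT (Suc n) x = (\<Sum>k\<in>{1..Suc n}. cc (Suc n) k * (odd_r k ^ 2 / (odd_r k ^ 2 - x ^ 2)))"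
proof (induction n arbitrary: x)
  case 0
  then show ?case by (simp add: TT_def cc_def)
next
  case (Suc n)
  define b where "b = odd_r (Suc (Suc n)) ^ 2"
  have bx: "b \<noteq> x ^ 2" using Suc.prems[rule_format, of "Suc (Suc n)"] b_def by auto
  have IHx: "TT (Suc n) x = (\<Sum>k\<in>{1..Suc n}. cc (Suc n) k * (odd_r k ^ 2 / (odd_r k ^ 2 - x ^ 2)))"
    using Suc.prems by (intro Suc.IH) auto
  have IHb: "TT (Suc n) (odd_r (Suc (Suc n))) = (\<Sum>k\<in>{1..Suc n}. cc (Suc n) k * (odd_r k ^ 2 / (odd_r k ^ 2 - b)))"
    unfolding b_def by (intro Suc.IH ballI) (subst odd_r_sq_eq, auto)
  have "TT (Suc (Suc n)) x = (\<Sum>k\<in>{1..Suc n}. cc (Suc n) k * (odd_r k ^ 2 / (odd_r k ^ 2 - x ^ 2)) * (b / (b - x^2)))"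
    unfolding TT_Suc[of "Suc n" x] IHx b_def by (rule sum_distrib_right)
  also have "\<dots> = (\<Sum>k\<in>{1..Suc n}. cc (Suc (Suc n)) k * (odd_r k ^ 2 / (odd_r k ^ 2 - x ^ 2)))
      + (\<Sum>k\<in>{1..Suc n}. cc (Suc n) k * (odd_r k ^ 2 / (odd_r k ^ 2 - b))) * (b / (b - x^2))"
  proof -
    have "cc (Suc n) k * (odd_r k ^ 2 / (odd_r k ^ 2 - x ^ 2)) * (b / (b - x^2))
       = cc (Suc (Suc n)) k * (odd_r k ^ 2 / (odd_r k ^ 2 - x ^ 2)) + cc (Suc n) k * (odd_r k ^ 2 / (odd_r k ^ 2 - b)) * (b / (b - x^2))"
      if k: "k \<in> {1..Suc n}" for k
    proof -
      have ab: "odd_r k ^ 2 \<noteq> b" unfolding b_def using k by (subst odd_r_sq_eq) auto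
      have ax: "odd_r k ^ 2 \<noteq> x ^ 2" using Suc.prems[rule_format, of k] k by auto
      have "cc (Suc (Suc n)) k = cc (Suc n) k * (b / (b - odd_r k ^ 2))"
        using k cc_Suc[of k "Suc n"] b_def by simp
      then show ?thesis using pf_alg2[OF ab ax bx, of "cc (Suc n) k"] by simp
    qed
    then have "(\<Sum>k\<in>{1..Suc n}. cc (Suc n) k * (odd_r k ^ 2 / (odd_r k ^ 2 - x ^ 2)) * (b / (b - x^2)))
       = (\<Sum>k\<in>{1..Suc n}. cc (Suc (Suc n)) k * (odd_r k ^ 2 / (odd_r k ^ 2 - x ^ 2)) + cc (Suc n) k * (odd_r k ^ 2 / (odd_r k ^ 2 - b)) * (b / (b - x^2)))"
      by (intro sum.cong) auto
    then show ?thesis by (simp only: sum.distrib sum_distrib_right)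
  qed
  also have "\<dots> = (\<Sum>k\<in>{1..Suc (Suc n)}. cc (Suc (Suc n)) k * (odd_r k ^ 2 / (odd_r k ^ 2 - x ^ 2)))"
    using IHb cc_diag[of "Suc n"] b_def by simp
  finally show ?case .
qed


lemma odd_r_nz: "k \<ge> 1 \<Longrightarrow> odd_r k \<noteq> 0" using odd_r_pos[of k] by auto

lemma tstar_one: "tstar2 j 1 = 1"
  by (induction j) auto

lemma tstar_Suc: "tstar2 (Suc j) (Suc n) = tstar2 (Suc j) n + tstar2 j (Suc n) / odd_r (Suc n) ^ 2"
  by (simp add: odd_r_def)

lemma cc_sum1: "(\<Sum>k\<in>{1..Suc n}. cc (Suc n) k) = 1"
proof -
  have "TT (Suc n) 0 = (\<Sum>k\<in>{1..Suc n}. cc (Suc n) k * (odd_r k ^ 2 / (odd_r k ^ 2 - 0 ^ 2)))"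
    by (rule xid) (use odd_r_nz in auto)
  moreover have "TT (Suc n) 0 = 1" unfolding TT_def
    by (intro prod.neutral ballI) (use odd_r_nz in auto)
  moreover have "(\<Sum>k\<in>{1..Suc n}. cc (Suc n) k * (odd_r k ^ 2 / (odd_r k ^ 2 - 0 ^ 2))) = (\<Sum>k\<in>{1..Suc n}. cc (Suc n) k)"
    by (intro sum.cong) (use odd_r_nz in auto)
  ultimately show ?thesis by simp
qed

lemma pw: "(x::real) ^ (2*Suc j) = x^(2*j) * x^2"
  by (simp add: power2_eq_square algebra_simps)

lemma tid_alg: fixes c p a b :: real assumes "p \<noteq> 0" "a \<noteq> 0" "b \<noteq> 0" "b \<noteq> a"
  shows "c/(p*a) + (c*(b/(b-a)))/p/b = (c*(b/(b-a)))/(p*a)"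
proof -
  have "b - a \<noteq> 0" using assms by auto
  then show ?thesis using assms by (simp add: divide_simps) (simp add: algebra_simps)
qed

lemma tid: "tstar2 j (Suc n) = (\<Sum>k\<in>{1..Suc n}. cc (Suc n) k / odd_r k ^ (2*j))"
proof (induction n arbitrary: j)
  case 0
  then show ?case using tstar_one[of j] by (simp add: cc_def odd_r_def)
next
  case (Suc n)
  note IHn = Suc.IH
  show ?case
  proof (induction j)
    case 0
    then show ?case using cc_sum1[of "Suc n"] by simp
  next
    case (Suc j)
    define b where "b = odd_r (Suc (Suc n)) ^ 2"
    have b0: "b \<noteq> 0" using odd_r_nz[of "Suc (Suc n)"] b_def by simp
    have "tstar2 (Suc j) (Suc (Suc n)) = tstar2 (Suc j) (Suc n) + tstar2 j (Suc (Suc n)) / b"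
      unfolding b_def by (rule tstar_Suc)
    also have "\<dots> = (\<Sum>k\<in>{1..Suc n}. cc (Suc n) k / odd_r k ^ (2*Suc j))
        + (\<Sum>k\<in>{1..Suc (Suc n)}. cc (Suc (Suc n)) k / odd_r k ^ (2*j)) / b"
      using IHn[of "Suc j"] Suc.IH by simp
    also have "\<dots> = (\<Sum>k\<in>{1..Suc n}. cc (Suc n) k / odd_r k ^ (2*Suc j)
                      + cc (Suc (Suc n)) k / odd_r k ^ (2*j) / b)
        + cc (Suc (Suc n)) (Suc (Suc n)) / odd_r (Suc (Suc n)) ^ (2*j) / b"
      by (simp add: sum.distrib sum_divide_distrib power_add add_divide_distrib)
    also have "\<dots> = (\<Sum>k\<in>{1..Suc n}. cc (Suc (Suc n)) k / (odd_r k ^ (2*j) * odd_r k ^ 2))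
        + cc (Suc (Suc n)) (Suc (Suc n)) / (odd_r (Suc (Suc n)) ^ (2*j) * b)"
    proof -
      have "cc (Suc n) k / odd_r k ^ (2*Suc j) + cc (Suc (Suc n)) k / odd_r k ^ (2*j) / b
          = cc (Suc (Suc n)) k / (odd_r k ^ (2*j) * odd_r k ^ 2)" if k: "k \<in> {1..Suc n}" for k
      proof -
        have ccs: "cc (Suc (Suc n)) k = cc (Suc n) k * (b / (b - odd_r k ^ 2))"
          using k cc_Suc[of k "Suc n"] b_def by simp
        have ba: "b \<noteq> odd_r k ^ 2" unfolding b_def using k by (subst odd_r_sq_eq) auto
        show ?thesis unfolding ccs pw
          by (rule tid_alg) (use k odd_r_nz[of k] b0 ba in auto)
      qed
      then show ?thesis by (simp add: divide_divide_eq_left)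
    qed
    also have "\<dots> = (\<Sum>k\<in>{1..Suc (Suc n)}. cc (Suc (Suc n)) k / odd_r k ^ (2*Suc j))"
      unfolding pw b_def by simp
    finally show ?case .
  qed
qed

lemma prod_odd: "(\<Prod>i\<in>{1..m}. odd_r i) * (2^m * fact m) = fact (2*m)"
proof (induction m)
  case 0 then show ?case by simp
next
  case (Suc m)
  have "(\<Prod>i\<in>{1..Suc m}. odd_r i) = (\<Prod>i\<in>{1..m}. odd_r i) * odd_r (Suc m)"
    by (simp add: mult.commute)
  moreover have "fact (2 * Suc m) = (fact (2*m) :: real) * ((2*real m + 1) * (2*real m + 2))"
    by (simp add: algebra_simps)
  ultimately show ?case using Suc.IH[symmetric] by (simp add: odd_r_def algebra_simps)
qed

lemma prod_rev: "(\<Prod>i\<in>{1..m}. real m + 1 - real i) = fact m"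
proof -
  have "(\<Prod>i\<in>{1..m}. real m + 1 - real i) = (\<Prod>i\<in>{1..m}. real (m + 1 - i))"
    by (intro prod.cong) (auto simp: of_nat_diff)
  also have "\<dots> = real (\<Prod>i\<in>{1..m}. (m + 1 - i))" by simp
  also have "(\<Prod>i\<in>{1..m}. (m + 1 - i)) = \<Prod>{1..m}"
    using prod.atLeastAtMost_rev[of "\<lambda>i. i" 1 m] by simp
  finally show ?thesis by (simp add: fact_prod)
qed

lemma prod_up: "(\<Prod>i\<in>{1..m}. real c + real i) * fact c = fact (c + m)"
proof (induction m)
  case 0 then show ?case by simp
next
  case (Suc m)
  have "(\<Prod>i\<in>{1..Suc m}. real c + real i) = (\<Prod>i\<in>{1..m}. real c + real i) * (real c + real (Suc m))"
    by (simp add: mult.commute)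
  then show ?case using Suc.IH[symmetric] by (simp add: algebra_simps)
qed

lemma neg1_inv: "inverse ((-1::real)^m) = (-1)^m"
  by (cases "even m") auto

lemma cc_diag_closed: "cc (Suc m) (Suc m) = (-1)^m * bb m 0 / 16^m"
proof -
  define P where "P = (\<Prod>i\<in>{1..m}. odd_r i)"
  define R where "R = (\<Prod>i\<in>{1..m}. real m + 1 - real i)"
  define U where "U = (\<Prod>i\<in>{1..m}. real m + real i)"
  have fac: "odd_r i ^ 2 - odd_r (Suc m) ^ 2 = (-4) * ((real m + 1 - real i) * (real m + real i))" for i
    by (simp add: odd_r_def power2_eq_square algebra_simps)
  have "cc (Suc m) (Suc m) = (\<Prod>i\<in>{1..m}. odd_r i ^ 2 / ((-4) * ((real m + 1 - real i) * (real m + real i))))"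
    unfolding cc_diag TT_def fac ..
  also have "\<dots> = (\<Prod>i\<in>{1..m}. odd_r i ^ 2) / ((\<Prod>i\<in>{1..m}. (-4::real)) * ((\<Prod>i\<in>{1..m}. real m + 1 - real i) * (\<Prod>i\<in>{1..m}. real m + real i)))"
    by (simp only: prod_dividef prod.distrib)
  also have "\<dots> = P^2 / ((-4)^m * (R * U))"
    by (simp only: P_def R_def U_def prod_power_distrib prod_constant card_atLeastAtMost) simp
  finally have c1: "cc (Suc m) (Suc m) = P^2 / ((-4)^m * (R * U))" .
  define F where "F = (fact (2*m) :: real)"
  define M where "M = (fact m :: real)"
  have M0: "M > 0" by (simp add: M_def)
  have P: "P = F / (2^m * M)" using prod_odd[of m] M0 unfolding P_def F_def M_def
    by (simp add: eq_divide_eq)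
  have R: "R = M" unfolding R_def M_def by (rule prod_rev)
  have U: "U = F / M" using prod_up[of m m] M0 unfolding U_def F_def M_def
    by (simp add: eq_divide_eq mult_2)
  have bb: "bb m 0 = F / (M * M)" unfolding bb_def F_def M_def
    by (simp add: binomial_fact mult_2)
  have m4: "(-4::real)^m = (-1)^m * 4^m" by (simp add: power_mult_distrib[symmetric])
  have m16: "(16::real)^m = 4^m * 4^m" by (simp add: power_mult_distrib[symmetric])
  have m2: "(2::real)^m * 2^m = 4^m" by (simp add: power_mult_distrib[symmetric])
  have "P^2 / ((-4)^m * (R * U)) = inverse ((-1)^m) * (F / (M * M) / 16^m)"
    unfolding P R U m4 m16 using M0 m2[symmetric]
    by (simp add: field_simps power2_eq_square)
  then show ?thesis unfolding c1 neg1_inv bb by simp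
qed


lemma step_alg: fixes q A A' B B' c c' s Oo K e f g h :: real
  assumes "q>0" "A>0" "e>0" "f>0" "g>0" "h>0" "K>0" "Oo > 0"
   "A' = A*(2*e*Oo)/(e*e)" "B' = B*(2*e*Oo)/(f*g)" "c' = c*(Oo^2/(4*f*h))"
   "c = s*(4/K)*(B*h*A)/(q*q)"
  shows "(4*q)/(e^2*A')*c' = s*(4/K)*(B'*g/((4*q)*e^2))"
  using assms(1-8) unfolding assms(9-12)
  by (simp add: field_simps power2_eq_square)

lemma base_alg: fixes e t A A' s q :: real
  assumes "e>0" "t>0" "q>0" "A>0" "A' = A*(2*e*t)/(e*e)"
  shows "(4*q)/(e^2*A') * (s*A/(q*q)) = s*(4/t)*(1*(2*e)/((4*q)*e^2))"
  using assms(1-4) unfolding assms(5) by (simp add: field_simps power2_eq_square)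

definition aa :: "nat \<Rightarrow> real" where "aa n = 4^n / (real n ^ 2 * bb n 0)"

lemma bb0_pos: "bb n 0 > 0" by (simp add: bb_def)

lemma solve_div: "(c::real) \<noteq> 0 \<Longrightarrow> a * c = b \<Longrightarrow> a = b / c"
  by (simp add: field_simps)

lemma bb0_Suc: "bb (Suc n) 0 = bb n 0 * (2*(1 + real n)*(2*real n + 1)) / ((1 + real n)*(1 + real n))"
  by (rule solve_div) (simp, use bb_B2[of 0 n] in \<open>simp add: algebra_simps\<close>)

lemma h_closed: assumes "1 \<le> k" "k \<le> n"
  shows "aa n * cc n k = (-1)^(k-1) * (4/odd_r k) * ee n k"
  using assms(2)
proof (induction n rule: dec_induct)
  case base
  obtain m where m: "k = Suc m" using assms(1) by (cases k) auto
  have "aa (Suc m) * cc (Suc m) (Suc m) = (4*4^m)/((1 + real m)^2*bb (Suc m) 0) * ((-1)^m*bb m 0/(4^m*4^m))"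
    unfolding cc_diag_closed aa_def by (simp add: power_mult_distrib[symmetric])
  also have "\<dots> = (-1)^m*(4/(2*real m + 1))*(1*(2*(1 + real m))/((4*4^m)*(1 + real m)^2))"
    by (rule base_alg[OF _ _ _ bb0_pos]) (auto simp: bb0_Suc)
  also have "\<dots> = (-1)^(Suc m - 1) * (4/odd_r (Suc m)) * ee (Suc m) (Suc m)"
    by (simp add: ee_def odd_r_def bb_same)
  finally show ?case using m by simp
next
  case (step n)
  have kn: "k \<le> n" using step by simp
  have n0: "real n > 0" using kn assms(1) by simp
  define s :: real where "s = (-1)^(k-1)"
  have B': "bb (Suc n) k = bb n k * (2*(1 + real n)*(2*real n + 1)) / ((1 + real n - real k)*(1 + real n + real k))"
    by (rule solve_div) (use kn in simp, use bb_B2[OF kn] kn in \<open>simp add: algebra_simps\<close>)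
  have dif: "odd_r (Suc n) ^ 2 - odd_r k ^ 2 = 4*(1 + real n - real k)*(real n + real k)"
    by (simp add: odd_r_def power2_eq_square algebra_simps)
  have c': "cc (Suc n) k = cc n k * (odd_r (Suc n) ^ 2 / (4*(1 + real n - real k)*(real n + real k)))"
    using cc_Suc[OF kn] dif by simp
  have IH: "cc n k = s*(4/odd_r k)*(bb n k*(real n + real k)*bb n 0)/(4^n*4^n)"
  proof -
    have "aa n * cc n k = s * (4/odd_r k) * ee n k" using step.IH s_def by simp
    moreover have "odd_r k \<noteq> 0" using odd_r_nz assms(1) by simp
    ultimately show ?thesis unfolding aa_def ee_def using n0 bb0_pos[of n]
      by (simp add: field_simps)
  qed
  have "aa (Suc n) * cc (Suc n) k = (4*4^n)/((1 + real n)^2*bb (Suc n) 0) * cc (Suc n) k"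
    by (simp add: aa_def)
  also have "\<dots> = s*(4/odd_r k)*(bb (Suc n) k*(1 + real n + real k)/((4*4^n)*(1 + real n)^2))"
    by (rule step_alg[OF _ bb0_pos _ _ _ _ _ _ _ _ c' IH])
      (use n0 kn assms(1) odd_r_pos[of k] in \<open>auto simp: bb0_Suc B' odd_r_def algebra_simps\<close>)
  also have "\<dots> = (-1)^(k-1) * (4/odd_r k) * ee (Suc n) k"
    by (simp add: s_def ee_def algebra_simps)
  finally show ?case .
qed

lemma alt_bound:
  fixes c :: "nat \<Rightarrow> real"
  assumes "\<And>i. c i \<ge> 0" "\<And>i. c (Suc i) \<le> c i"
  shows "0 \<le> (\<Sum>i<n. (-1)^i * c i) \<and> (\<Sum>i<n. (-1)^i * c i) \<le> c 0"
  using assms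
proof (induction n arbitrary: c)
  case 0 then show ?case by simp
next
  case (Suc n)
  have IH: "0 \<le> (\<Sum>i<n. (-1)^i * c (Suc i)) \<and> (\<Sum>i<n. (-1)^i * c (Suc i)) \<le> c (Suc 0)"
    using Suc.prems by (intro Suc.IH) auto
  have "(\<Sum>i<Suc n. (-1)^i * c i) = c 0 - (\<Sum>i<n. (-1)^i * c (Suc i))"
    by (subst sum.lessThan_Suc_shift) (simp add: sum_negf)
  then show ?case using IH Suc.prems(1)[of 0] Suc.prems(2)[of 0] by simp
qed

lemma alt_abs:
  fixes c :: "nat \<Rightarrow> real"
  assumes "\<And>i. c i \<ge> 0" "\<And>i. c (Suc i) \<le> c i"
  shows "\<bar>\<Sum>i<n. (-1)^i * c i\<bar> \<le> c 0"
  using alt_bound[of c n] assms by auto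

lemma Lk_mono: assumes "k \<ge> 1" shows "Lk (Suc k) \<le> Lk k"
proof -
  define t where "t b = 1 / (real k + real b) - 1 / (real (Suc k) + real b)" for b
  have tlim: "t \<longlonglongrightarrow> 0"
  proof -
    have "(\<lambda>b. 1 / (real k + real b) - 1 / (real (Suc k) + real b)) \<longlonglongrightarrow> 0 - 0"
      using assms by (intro tendsto_diff inv_lim) auto
    moreover have "t = (\<lambda>b. 1 / (real k + real b) - 1 / (real (Suc k) + real b))"
      by (rule ext) (simp add: t_def)
    ultimately show ?thesis by simp
  qed
  have tdec: "t (Suc b) \<le> t b" for b
  proof -
    have e: "t b = 1 / ((real k + real b) * (real k + real b + 1))" for b
      using assms by (simp add: t_def field_simps)
    show ?thesis unfolding e using assms
      by (intro divide_left_mono mult_mono) auto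
  qed
  have "decseq t" using tdec by (simp add: decseq_Suc_iff)
  then have "monoseq t" by (simp add: monoseq_iff)
  note L = summable_Leibniz[OF tlim this]
  have t0: "0 < t 0"
  proof -
    have "real k > 0" using assms by simp
    then have "1 / (real (Suc k) + 0) < 1 / (real k + 0)" by (intro divide_strict_left_mono) auto
    then show ?thesis by (simp add: t_def)
  qed
  have "(\<Sum>b. (-1)^b * t b) \<in> {\<Sum>i<2 * 0. (- 1) ^ i * t i..\<Sum>i<2 * 0 + 1. (- 1) ^ i * t i}"
    using L(2) t0 by blast
  then have nn: "0 \<le> (\<Sum>b. (-1)^b * t b)" by simp
  have "(\<Sum>b. (-1)^b * t b) = Lk k - Lk (Suc k)"
    unfolding Lk_def t_def right_diff_distrib
    by (rule suminf_diff[symmetric]; rule Lk_props(1)) (use assms in auto)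
  then show ?thesis using nn by simp
qed


definition dM :: "nat \<Rightarrow> nat \<Rightarrow> real" where
  "dM j a = Lk (Suc a) / odd_r (Suc a) ^ (2*j+1)"

lemma odd_r_Suc: "odd_r (Suc a) = 2 * real a + 1" by (simp add: odd_r_def)

lemma dM_nonneg: "dM j a \<ge> 0"
  unfolding dM_def using Lk_props(2)[of "Suc a"] by (simp add: odd_r_Suc)

lemma dM_dec: "dM j (Suc a) \<le> dM j a"
proof -
  have "Lk (Suc (Suc a)) \<le> Lk (Suc a)" by (rule Lk_mono) simp
  moreover have "odd_r (Suc a) ^ (2*j+1) \<le> odd_r (Suc (Suc a)) ^ (2*j+1)"
    by (intro power_mono) (auto simp: odd_r_Suc)
  moreover have "0 < odd_r (Suc a) ^ (2*j+1)" by (simp add: odd_r_Suc)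
  moreover have "0 \<le> Lk (Suc (Suc a))" using Lk_props(2)[of "Suc (Suc a)"] by simp
  ultimately show ?thesis unfolding dM_def by (intro frac_le) auto
qed

lemma dM_le: "dM j a \<le> 1 / real (Suc a)"
proof -
  have "1 \<le> odd_r (Suc a) ^ (2*j+1)" unfolding odd_r_Suc by (rule one_le_power) simp
  then have "dM j a \<le> Lk (Suc a)"
    unfolding dM_def using Lk_props(2)[of "Suc a"] by (simp add: divide_le_eq mult_le_cancel_left1)
  also have "\<dots> \<le> 1 / real (Suc a)" using Lk_props(3)[of "Suc a"] by simp
  finally show ?thesis .
qed

lemma dM_lim: "dM j \<longlonglongrightarrow> 0"
proof (rule tendsto_sandwich[of "\<lambda>_. 0" _ _ "\<lambda>n. inverse (real (Suc n))"])
  show "\<forall>\<^sub>F n in sequentially. 0 \<le> dM j n" using dM_nonneg by simp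
  show "\<forall>\<^sub>F n in sequentially. dM j n \<le> inverse (real (Suc n))"
    using dM_le by (simp add: divide_inverse)
qed (auto intro!: LIMSEQ_inverse_real_of_nat simp del: of_nat_Suc)

lemma M_summable: "summable (\<lambda>a. (-1)^a * dM j a)"
proof -
  have "decseq (dM j)" using dM_dec by (simp add: decseq_Suc_iff)
  then have "monoseq (dM j)" by (simp add: monoseq_iff)
  then show ?thesis using summable_Leibniz(1)[OF dM_lim] by blast
qed


definition Tl :: "nat \<Rightarrow> nat \<Rightarrow> real" where
  "Tl N k = (\<Sum>i. ee (Suc (i + N)) k)"

lemma Tl_summable: "k \<ge> 1 \<Longrightarrow> summable (\<lambda>i. ee (Suc (i + N)) k)"
  using summable_ignore_initial_segment[OF ee_summable, of k N] by simp

lemma partial_ee: assumes "k \<ge> 1" shows "(\<Sum>i<N. ee (Suc i) k) = 2 * Lk k - Tl N k"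
proof -
  have "EE k = (\<Sum>i. ee (Suc (i + N)) k) + (\<Sum>i<N. ee (Suc i) k)"
    unfolding EE_def using suminf_split_initial_segment[OF ee_summable[OF assms], of N] by simp
  then show ?thesis using EE_Lk[OF assms] by (simp add: Tl_def)
qed

lemma Tl_nonneg: "k \<ge> 1 \<Longrightarrow> Tl N k \<ge> 0"
  unfolding Tl_def by (intro suminf_nonneg Tl_summable) (auto simp: ee_nonneg)

lemma Tl_mono: "k \<ge> 1 \<Longrightarrow> Tl N (Suc k) \<le> Tl N k"
  unfolding Tl_def by (intro suminf_le Tl_summable) (auto simp: ee_mono)

lemma Tl1_lim: "(\<lambda>N. Tl N 1) \<longlonglongrightarrow> 0"
proof -
  have "(\<lambda>N. \<Sum>i<N. ee (Suc i) 1) \<longlonglongrightarrow> EE 1"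
    unfolding EE_def by (intro summable_LIMSEQ ee_summable) simp
  then have "(\<lambda>N. 2 * Lk 1 - (\<Sum>i<N. ee (Suc i) 1)) \<longlonglongrightarrow> 2 * Lk 1 - EE 1"
    by (intro tendsto_intros)
  moreover have "2 * Lk 1 - (\<Sum>i<N. ee (Suc i) 1) = Tl N 1" for N
    using partial_ee[of 1 N] by simp
  ultimately show ?thesis using EE_Lk[of 1] by simp
qed

definition cE :: "nat \<Rightarrow> nat \<Rightarrow> nat \<Rightarrow> real" where
  "cE j N a = (4 / odd_r (Suc a)) / odd_r (Suc a) ^ (2*j) * Tl N (Suc a)"

lemma cE_nonneg: "cE j N a \<ge> 0"
  unfolding cE_def using Tl_nonneg[of "Suc a" N] by (simp add: odd_r_Suc)

lemma cE_dec: "cE j N (Suc a) \<le> cE j N a"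
proof -
  have w: "(4 / odd_r (Suc (Suc a))) / odd_r (Suc (Suc a)) ^ (2*j) \<le> (4 / odd_r (Suc a)) / odd_r (Suc a) ^ (2*j)"
  proof -
    have "4 / odd_r (Suc (Suc a)) \<le> 4 / odd_r (Suc a)"
      by (intro divide_left_mono) (auto simp: odd_r_Suc)
    moreover have "odd_r (Suc a) ^ (2*j) \<le> odd_r (Suc (Suc a)) ^ (2*j)"
      by (intro power_mono) (auto simp: odd_r_Suc)
    ultimately show ?thesis by (intro frac_le) (auto simp: odd_r_Suc)
  qed
  show ?thesis unfolding cE_def
    by (intro mult_mono w Tl_mono Tl_nonneg) (auto simp: odd_r_Suc)
qed

lemma cE_lim: "(\<lambda>N. \<Sum>a<N. (-1)^a * cE j N a) \<longlonglongrightarrow> 0"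
proof -
  have b: "\<bar>\<Sum>a<N. (-1)^a * cE j N a\<bar> \<le> 4 * Tl N 1" for N
  proof -
    have "\<bar>\<Sum>a<N. (-1)^a * cE j N a\<bar> \<le> cE j N 0"
      by (rule alt_abs) (auto simp: cE_nonneg cE_dec)
    then show ?thesis by (simp add: cE_def odd_r_def)
  qed
  have l: "(\<lambda>N. 4 * Tl N 1) \<longlonglongrightarrow> 0" using Tl1_lim tendsto_mult_right_zero by blast
  show ?thesis by (rule Lim_null_comparison[OF always_eventually l]) (use b in auto)
qed


definition GG2 :: "nat \<Rightarrow> nat \<Rightarrow> real" where
  "GG2 j a = (-1)^a * (4 / odd_r (Suc a)) / odd_r (Suc a) ^ (2*j)"

lemma row: "aa (Suc i) * tstar2 j (Suc i) = (\<Sum>a<Suc i. GG2 j a * ee (Suc i) (Suc a))"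
proof -
  have "aa (Suc i) * tstar2 j (Suc i) = (\<Sum>k\<in>{1..Suc i}. aa (Suc i) * cc (Suc i) k / odd_r k ^ (2*j))"
    unfolding tid sum_distrib_left times_divide_eq_right ..
  also have "\<dots> = (\<Sum>k\<in>{1..Suc i}. (-1)^(k-1) * (4/odd_r k) * ee (Suc i) k / odd_r k ^ (2*j))"
    by (intro sum.cong refl) (simp add: h_closed)
  also have "\<dots> = (\<Sum>a<Suc i. GG2 j a * ee (Suc i) (Suc a))"
    by (simp only: One_nat_def sum.atLeast1_atMost_eq) (simp add: GG2_def)
  finally show ?thesis .
qed

lemma row_ext: assumes "i < N"
  shows "(\<Sum>a<Suc i. GG2 j a * ee (Suc i) (Suc a)) = (\<Sum>a<N. GG2 j a * ee (Suc i) (Suc a))"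
proof (rule sum.mono_neutral_left)
  show "finite {..<N}" by simp
  show "{..<Suc i} \<subseteq> {..<N}" using assms by auto
  show "\<forall>a\<in>{..<N} - {..<Suc i}. GG2 j a * ee (Suc i) (Suc a) = 0"
    by (auto simp: ee_def bb_zero)
qed

lemma lhs_partial:
  "(\<Sum>i<N. aa (Suc i) * tstar2 j (Suc i)) = 8 * (\<Sum>a<N. (-1)^a * dM j a) - (\<Sum>a<N. (-1)^a * cE j N a)"
proof -
  have "(\<Sum>i<N. aa (Suc i) * tstar2 j (Suc i)) = (\<Sum>i<N. \<Sum>a<N. GG2 j a * ee (Suc i) (Suc a))"
    by (intro sum.cong refl) (subst row, rule row_ext, simp)
  also have "\<dots> = (\<Sum>a<N. GG2 j a * (\<Sum>i<N. ee (Suc i) (Suc a)))"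
    by (subst sum.swap) (simp add: sum_distrib_left)
  also have "\<dots> = (\<Sum>a<N. GG2 j a * (2 * Lk (Suc a) - Tl N (Suc a)))"
    by (intro sum.cong refl) (simp add: partial_ee)
  also have "\<dots> = (\<Sum>a<N. 8 * ((-1)^a * dM j a) - (-1)^a * cE j N a)"
  proof (intro sum.cong refl)
    fix a
    have "odd_r (Suc a) ^ (2*j+1) = odd_r (Suc a) ^ (2*j) * odd_r (Suc a)" by simp
    moreover have "odd_r (Suc a) \<noteq> 0" by (simp add: odd_r_Suc)
    ultimately show "GG2 j a * (2 * Lk (Suc a) - Tl N (Suc a)) = 8 * ((-1)^a * dM j a) - (-1)^a * cE j N a"
      unfolding GG2_def dM_def cE_def by (simp add: field_simps)
  qed
  also have "\<dots> = 8 * (\<Sum>a<N. (-1)^a * dM j a) - (\<Sum>a<N. (-1)^a * cE j N a)"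
    by (simp add: sum_subtractf sum_distrib_left)
  finally show ?thesis .
qed

definition Mval :: "nat \<Rightarrow> real" where "Mval j = (\<Sum>a. (-1)^a * dM j a)"

lemma lhs_sums: "(\<lambda>i. aa (Suc i) * tstar2 j (Suc i)) sums (8 * Mval j)"
proof -
  have "(\<lambda>N. 8 * (\<Sum>a<N. (-1)^a * dM j a) - (\<Sum>a<N. (-1)^a * cE j N a)) \<longlonglongrightarrow> 8 * Mval j - 0"
    unfolding Mval_def by (intro tendsto_intros summable_LIMSEQ M_summable cE_lim)
  then show ?thesis unfolding sums_def lhs_partial by simp
qed

lemma t0: fixes p q :: real
  shows "(-1)^m / (p^(m+1) * q^k) = (-1)^m * (1/p)^(m+1) * (1/q)^k"
  by (simp add: power_one_over)

lemma t1: fixes u v :: real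
  shows "(-1)^m * u^(m+1) * v^(k+1) = u * v * ((-u)^m * v^k)"
proof -
  have a: "(-u)^m = (-1)^m * u^m" by (rule power_minus)
  have b: "u^(m+1) = u^m * u" "v^(k+1) = v^k * v" by simp_all
  show ?thesis unfolding a b by (simp only: mult_ac)
qed

lemma t2: fixes p q X :: real assumes "p>0" "q>0"
  shows "(1/p) * (1/q) * (X / ((1/p) + (1/q))) = X / (p+q)"
proof -
  have e: "(1/p) + (1/q) = (p+q)/(p*q)" using assms by (simp add: field_simps)
  show ?thesis unfolding e using assms by (simp add: field_simps)
qed

lemma neg_lemma: fixes a b S :: real shows "(-a - b) * S = - ((a + b) * S)"
  by (simp add: algebra_simps)

lemma key_id: fixes p q :: real assumes "p > 0" "q > 0"
  shows "(\<Sum>m\<le>2*j. (-1)^m / (p^(m+1) * q^(2*j-m+1))) = (1/p^(2*j+1) + 1/q^(2*j+1)) / (p+q)"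
proof -
  define u where "u = 1/p"
  define v where "v = 1/q"
  have u0: "u > 0" and v0: "v > 0" using assms by (auto simp: u_def v_def)
  have t: "(-1)^m / (p^(m+1) * q^(2*j-m+1)) = u * v * ((-u)^m * v^(2*j-m))" for m
    unfolding t0 u_def[symmetric] v_def[symmetric] by (rule t1)
  have d: "(-u)^Suc (2*j) - v^Suc (2*j) = (-u - v) * (\<Sum>i<Suc (2*j). (-u)^i * v^(2*j-i))"
    by (rule diff_power_eq_sum)
  have m: "(-u)^Suc (2*j) = - (u^Suc (2*j))"
    by (rule power_minus_odd) simp
  have mm: "(-u - v) * (\<Sum>i<Suc (2*j). (-u)^i * v^(2*j-i)) = - ((u + v) * (\<Sum>i<Suc (2*j). (-u)^i * v^(2*j-i)))"
    by (rule neg_lemma)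
  have "(u + v) * (\<Sum>i<Suc (2*j). (-u)^i * v^(2*j-i)) = u^Suc (2*j) + v^Suc (2*j)"
    using d unfolding m mm by linarith
  then have S: "(\<Sum>i<Suc (2*j). (-u)^i * v^(2*j-i)) = (u^Suc (2*j) + v^Suc (2*j)) / (u + v)"
    using u0 v0 by (simp add: eq_divide_eq mult.commute)
  have "(\<Sum>m\<le>2*j. (-1)^m / (p^(m+1) * q^(2*j-m+1))) = u * v * (\<Sum>m<Suc (2*j). (-u)^m * v^(2*j-m))"
    unfolding t sum_distrib_left[symmetric] lessThan_Suc_atMost ..
  also have "\<dots> = u * v * ((u^(2*j+1) + v^(2*j+1)) / (u + v))"
    unfolding S by simp
  also have "\<dots> = (1/p^(2*j+1) + 1/q^(2*j+1)) / (p+q)"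
    unfolding u_def v_def power_one_over by (rule t2[OF assms])
  finally show ?thesis .
qed


definition pp :: "nat \<Rightarrow> real" where "pp a = 2 * real a + 1"

lemma pp_pos: "pp a > 0" by (simp add: pp_def)
lemma pp_nz: "pp a \<noteq> 0" using pp_pos[of a] by simp
lemma odd_pp: "odd_r (Suc a) = pp a" by (simp add: odd_r_Suc pp_def)

definition PA :: "nat \<Rightarrow> nat \<Rightarrow> real" where
  "PA m N = (\<Sum>i<N. (-1)^i / pp i ^ m)"

lemma Lk_partial: assumes "k \<ge> 1"
  shows "(\<Sum>b<N. (-1)^b * (1 / (real k + real b))) = Lk k - (-1)^N * Lk (k + N)"
proof -
  have "Lk k = (\<Sum>b. (-1)^(b+N) * (1 / (real k + real (b+N)))) + (\<Sum>b<N. (-1)^b * (1 / (real k + real b)))"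
    unfolding Lk_def by (rule suminf_split_initial_segment[OF Lk_props(1)[OF assms]])
  moreover have "(\<Sum>b. (-1)^(b+N) * (1 / (real k + real (b+N)))) = (-1)^N * Lk (k + N)"
  proof -
    have "(\<lambda>b. (-1)^(b+N) * (1 / (real k + real (b+N)))) = (\<lambda>b. (-1)^N * ((-1)^b * (1 / (real (k+N) + real b))))"
      by (rule ext) (simp add: power_add algebra_simps)
    moreover have "summable (\<lambda>b. (-1)^b * (1 / (real (k+N) + real b)))"
      by (rule Lk_props(1)) (use assms in simp)
    ultimately show ?thesis unfolding Lk_def by (simp only: suminf_mult)
  qed
  ultimately show ?thesis by simp
qed

lemma inner_b: "(\<Sum>b<N. (-1)^b / (pp a + pp b)) = (Lk (Suc a) - (-1)^N * Lk (Suc a + N)) / 2"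
proof -
  have "(\<Sum>b<N. (-1)^b / (pp a + pp b)) = (\<Sum>b<N. (-1)^b * (1 / (real (Suc a) + real b))) / 2"
    unfolding sum_divide_distrib by (intro sum.cong refl) (simp add: pp_def field_simps)
  then show ?thesis using Lk_partial[of "Suc a" N] by simp
qed

lemma rhs_step3: "(-1)^m * ((-1)^a / pp a ^ (m+1) * ((-1)^b / pp b ^ (2*j-m+1)))
    = ((-1)^a * (-1)^b) * ((-1)^m / (pp a ^ (m+1) * pp b ^ (2*j-m+1)))"
  by (simp add: mult_ac)

definition QQ :: "nat \<Rightarrow> nat \<Rightarrow> real" where
  "QQ j N = (\<Sum>a<N. (-1)^a * (Lk (Suc a + N) / odd_r (Suc a) ^ (2*j+1)))"

lemma rhs_fin:
  "(\<Sum>m\<le>2*j. (-1)^m * (PA (m+1) N * PA (2*j-m+1) N))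
     = (\<Sum>a<N. (-1)^a * dM j a) - (-1)^N * QQ j N"
proof -
  define X where "X a b = ((-1)^a * (-1)^b) * ((1/pp a^(2*j+1)) / (pp a + pp b))" for a b
  have "(\<Sum>m\<le>2*j. (-1)^m * (PA (m+1) N * PA (2*j-m+1) N))
      = (\<Sum>m\<le>2*j. \<Sum>a<N. \<Sum>b<N. (-1)^m * ((-1)^a / pp a ^ (m+1) * ((-1)^b / pp b ^ (2*j-m+1))))"
    unfolding PA_def sum_product unfolding sum_distrib_left ..
  also have "\<dots> = (\<Sum>a<N. \<Sum>b<N. \<Sum>m\<le>2*j. (-1)^m * ((-1)^a / pp a ^ (m+1) * ((-1)^b / pp b ^ (2*j-m+1))))"
    by (subst sum.swap) (simp only: sum.swap[of _ "{..2*j}"])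
  also have "\<dots> = (\<Sum>a<N. \<Sum>b<N. ((-1)^a * (-1)^b) * (\<Sum>m\<le>2*j. (-1)^m / (pp a ^ (m+1) * pp b ^ (2*j-m+1))))"
    unfolding rhs_step3 sum_distrib_left ..
  also have "\<dots> = (\<Sum>a<N. \<Sum>b<N. ((-1)^a * (-1)^b) * ((1/pp a^(2*j+1) + 1/pp b^(2*j+1)) / (pp a + pp b)))"
    by (simp only: key_id[OF pp_pos pp_pos])
  also have "\<dots> = (\<Sum>a<N. \<Sum>b<N. X a b + X b a)"
    by (intro sum.cong refl) (simp add: X_def add_divide_distrib distrib_left add.commute mult.commute)
  also have "\<dots> = (\<Sum>a<N. \<Sum>b<N. X a b) + (\<Sum>a<N. \<Sum>b<N. X b a)"
    by (simp only: sum.distrib)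
  also have "(\<Sum>a<N. \<Sum>b<N. X b a) = (\<Sum>a<N. \<Sum>b<N. X a b)"
    by (rule sum.swap)
  also have "(\<Sum>a<N. \<Sum>b<N. X a b) = (\<Sum>a<N. (-1)^a * (1/pp a^(2*j+1)) * (\<Sum>b<N. (-1)^b / (pp a + pp b)))"
    unfolding X_def sum_distrib_left by (intro sum.cong refl) (simp add: mult_ac)
  also have "\<dots> = (\<Sum>a<N. (-1)^a * (1/pp a^(2*j+1)) * ((Lk (Suc a) - (-1)^N * Lk (Suc a + N)) / 2))"
    unfolding inner_b ..
  finally have "(\<Sum>m\<le>2*j. (-1)^m * (PA (m+1) N * PA (2*j-m+1) N))
     = 2 * (\<Sum>a<N. (-1)^a * (1/pp a^(2*j+1)) * ((Lk (Suc a) - (-1)^N * Lk (Suc a + N)) / 2))"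
    by simp
  also have "\<dots> = (\<Sum>a<N. (-1)^a * dM j a - (-1)^N * ((-1)^a * (Lk (Suc a + N) / odd_r (Suc a) ^ (2*j+1))))"
    unfolding sum_distrib_left
    by (intro sum.cong refl) (simp add: dM_def odd_pp pp_nz field_simps)
  also have "\<dots> = (\<Sum>a<N. (-1)^a * dM j a) - (-1)^N * QQ j N"
    unfolding QQ_def by (simp add: sum_subtractf sum_distrib_left)
  finally show ?thesis .
qed


lemma beta_summable: assumes "m \<ge> 1" shows "summable (\<lambda>i. (-1)^i / pp i ^ m)"
proof -
  define a where "a i = 1 / pp i ^ m" for i
  have ple: "pp i \<le> pp i ^ m" for i
  proof -
    have "1 \<le> pp i" by (simp add: pp_def)
    then have "pp i ^ 1 \<le> pp i ^ m" using assms by (intro power_increasing) auto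
    then show ?thesis by simp
  qed
  have a_le: "a i \<le> inverse (real (Suc i))" for i
  proof -
    have "real (Suc i) \<le> pp i ^ m" using ple[of i] by (simp add: pp_def)
    then show ?thesis unfolding a_def by (simp add: divide_inverse le_imp_inverse_le)
  qed
  have alim: "a \<longlonglongrightarrow> 0"
  proof (rule tendsto_sandwich[of "\<lambda>_. 0" _ _ "\<lambda>n. inverse (real (Suc n))"])
    show "\<forall>\<^sub>F n in sequentially. 0 \<le> a n" by (simp add: a_def pp_pos less_imp_le)
    show "\<forall>\<^sub>F n in sequentially. a n \<le> inverse (real (Suc n))" using a_le by simp
  qed (auto intro!: LIMSEQ_inverse_real_of_nat simp del: of_nat_Suc)
  have "decseq a" unfolding decseq_Suc_iff a_def
    by (intro allI divide_left_mono power_mono mult_pos_pos) (auto simp: pp_def less_imp_le)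
  then have "monoseq a" by (simp add: monoseq_iff)
  then have "summable (\<lambda>i. (-1)^i * a i)" using summable_Leibniz(1)[OF alim] by blast
  then show ?thesis by (simp add: a_def)
qed

lemma dbeta_pp: "dbeta m = (\<Sum>i. (-1)^i / pp i ^ m)"
  by (simp add: dbeta_def pp_def)

lemma PA_lim: "m \<ge> 1 \<Longrightarrow> (\<lambda>N. PA m N) \<longlonglongrightarrow> dbeta m"
  unfolding PA_def dbeta_pp by (rule summable_LIMSEQ[OF beta_summable])

lemma QQ_lim: "(\<lambda>N. (-1)^N * QQ j N) \<longlonglongrightarrow> 0"
proof -
  define c where "c N a = Lk (Suc a + N) / odd_r (Suc a) ^ (2*j+1)" for N a
  have cnn: "c N a \<ge> 0" for N a
    unfolding c_def using Lk_props(2)[of "Suc a + N"] by (simp add: odd_pp pp_pos less_imp_le)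
  have cdec: "c N (Suc a) \<le> c N a" for N a
  proof -
    have "Lk (Suc (Suc a) + N) \<le> Lk (Suc a + N)" using Lk_mono[of "Suc a + N"] by simp
    moreover have "odd_r (Suc a) ^ (2*j+1) \<le> odd_r (Suc (Suc a)) ^ (2*j+1)"
      by (intro power_mono) (auto simp: odd_r_Suc)
    moreover have "0 < odd_r (Suc a) ^ (2*j+1)" by (simp add: odd_r_Suc)
    moreover have "0 \<le> Lk (Suc (Suc a) + N)" using Lk_props(2)[of "Suc (Suc a) + N"] by simp
    ultimately show ?thesis unfolding c_def by (intro frac_le) auto
  qed
  have b: "\<bar>(-1)^N * QQ j N\<bar> \<le> inverse (real (Suc N))" for N
  proof -
    have "\<bar>QQ j N\<bar> \<le> c N 0" unfolding QQ_def c_def[symmetric]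
      by (rule alt_abs) (auto simp: cnn cdec)
    also have "c N 0 = Lk (Suc N)" by (simp add: c_def odd_r_def)
    also have "\<dots> \<le> inverse (real (Suc N))" using Lk_props(3)[of "Suc N"] by (simp add: divide_inverse)
    finally show ?thesis by (simp add: abs_mult)
  qed
  have l: "(\<lambda>N. inverse (real (Suc N))) \<longlonglongrightarrow> 0"
    by (rule LIMSEQ_inverse_real_of_nat)
  show ?thesis by (rule Lim_null_comparison[OF always_eventually l]) (use b in auto)
qed

lemma rhs_value:
  "(\<Sum>k=0..2*j. (-1)^k * dbeta (k+1) * dbeta (2*j - k + 1)) = Mval j"
proof -
  have l1: "(\<lambda>N. \<Sum>m\<le>2*j. (-1)^m * (PA (m+1) N * PA (2*j-m+1) N))
      \<longlonglongrightarrow> (\<Sum>m\<le>2*j. (-1)^m * (dbeta (m+1) * dbeta (2*j-m+1)))"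
    by (intro tendsto_sum tendsto_mult tendsto_const PA_lim) auto
  have l2: "(\<lambda>N. (\<Sum>a<N. (-1)^a * dM j a) - (-1)^N * QQ j N) \<longlonglongrightarrow> Mval j - 0"
    unfolding Mval_def by (intro tendsto_diff summable_LIMSEQ M_summable QQ_lim)
  have "(\<Sum>m\<le>2*j. (-1)^m * (dbeta (m+1) * dbeta (2*j-m+1))) = Mval j - 0"
    using LIMSEQ_unique[OF l1 l2[folded rhs_fin]] .
  then show ?thesis by (simp add: atLeast0AtMost mult.assoc)
qed

theorem theorem1:
  fixes j :: nat
  shows "(\<lambda>i. let n = Suc i in
            4^n / (real n ^ 2 * real (2*n choose n)) * tstar2 j n)
         sums (8 * (\<Sum>k=0..2*j. (-1)^k * dbeta (k+1) * dbeta (2*j - k + 1)))"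
proof -
  have "(\<lambda>i. let n = Suc i in 4^n / (real n ^ 2 * real (2*n choose n)) * tstar2 j n)
      = (\<lambda>i. aa (Suc i) * tstar2 j (Suc i))"
    by (rule ext) (simp add: aa_def bb_def Let_def)
  then show ?thesis using lhs_sums[of j] rhs_value[of j] by simp
qed


end
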